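(* For every $n\in\mathbb N$, Thompson's group $F$ acts transitively, via $f\cdot x=\iota(f)(x)$, on the set \[ \Sigma_n=\{(x_1,\ldots,x_n)\in(\{0,1\}^* )^n : x_1 <_{\rm lex} x_2 <_{\rm lex}\cdots<_{\rm lex} x_n\}. \]
   Context: Let $\{0,1\}^*$ be the finite words over $\{0,1\}$ (empty word $\varepsilon$). Order $\{0,1\}^*$ by $\le_{\rm lex}$: for words $x,y$ append the infinite string $\tfrac12\tfrac12\cdots$ to each and compare the results lexicographically with $0<\tfrac12<1$ (so e.g. $00<_{\rm lex}0<_{\rm lex}01$). A finite rooted binary subtree is a finite prefix-closed set of words containing $\varepsilon$ in which each element has both or neither of its children $x0,x1$; its leaves are the elements with no children and its nodes the others. Thompson's group $F$ is the group of homeomorphisms $f$ of $\{0,1\}^{\mathbb N}$ for which there are finite rooted binary subtrees $L,R$ with leaves $\ell_1<_{\rm lex}\cdots<_{\rm lex}\ell_k$ and $r_1<_{\rm lex}\cdots<_{\rm lex}r_k$ such that $f(\ell_i\omega)=r_i\omega$. For such $f$, let $\iota(f)$ be the bijection of $\{0,1\}^*$ sending the $i$-th node of $L$ (in $\le_{\rm lex}$ order) to the $i$-th node of $R$, and sending $\ell_i s\mapsto r_i s$ for all words $s$; this is independent of the choice of $(L,R)$ and defines an action of $F$ on $\{0,1\}^*$. *)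

theory Defs
  imports "HOL-Analysis.Analysis"
begin

text \<open>Words over {0,1} are bool lists (False = 0, True = 1).
  Lex order: pad with the infinite string 1/2 1/2 ... and compare
  lexicographically with 0 < 1/2 < 1; we code letters as 0, 1, 2 (1 = one half).\<close>

definition padded :: "bool list \<Rightarrow> nat \<Rightarrow> nat" where
  "padded x i = (if i < length x then (if x ! i then 2 else 0) else 1)"

definition lex_less :: "bool list \<Rightarrow> bool list \<Rightarrow> bool" where
  "lex_less x y \<longleftrightarrow>
     (\<exists>k. (\<forall>i<k. padded x i = padded y i) \<and> padded x k < padded y k)"

definition is_tree :: "bool list set \<Rightarrow> bool" where
  "is_tree T \<longleftrightarrow> finite T \<and> [] \<in> T \<and>
     (\<forall>x s. x @ s \<in> T \<longrightarrow> x \<in> T) \<and>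
     (\<forall>x\<in>T. (x @ [False] \<in> T) = (x @ [True] \<in> T))"

definition leaves :: "bool list set \<Rightarrow> bool list set" where
  "leaves T = {x \<in> T. x @ [False] \<notin> T \<and> x @ [True] \<notin> T}"

definition nodes :: "bool list set \<Rightarrow> bool list set" where
  "nodes T = T - leaves T"

definition lex_enum :: "bool list set \<Rightarrow> bool list list" where
  "lex_enum A = (THE xs. sorted_wrt lex_less xs \<and> set xs = A)"

definition cat :: "bool list \<Rightarrow> (nat \<Rightarrow> bool) \<Rightarrow> (nat \<Rightarrow> bool)" where
  "cat l \<omega> = (\<lambda>n. if n < length l then l ! n else \<omega> (n - length l))"

definition represents :: "bool list set \<Rightarrow> bool list set \<Rightarrow> ((nat \<Rightarrow> bool) \<Rightarrow> (nat \<Rightarrow> bool)) \<Rightarrow> bool" where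
  "represents L R f \<longleftrightarrow> is_tree L \<and> is_tree R \<and> card (leaves L) = card (leaves R) \<and>
     (\<forall>i < card (leaves L). \<forall>\<omega>. f (cat (lex_enum (leaves L) ! i) \<omega>) = cat (lex_enum (leaves R) ! i) \<omega>)"

definition thompsonF :: "((nat \<Rightarrow> bool) \<Rightarrow> (nat \<Rightarrow> bool)) set" where
  "thompsonF = {f. (\<exists>g. homeomorphism UNIV UNIV f g) \<and> (\<exists>L R. represents L R f)}"

definition iota_pair :: "bool list set \<Rightarrow> bool list set \<Rightarrow> bool list \<Rightarrow> bool list" where
  "iota_pair L R x =
     (if x \<in> nodes L then
        lex_enum (nodes R) ! (THE i. i < length (lex_enum (nodes L)) \<and> lex_enum (nodes L) ! i = x)
      else
        (let i = (THE i. i < length (lex_enum (leaves L)) \<and>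
                         (\<exists>s. x = lex_enum (leaves L) ! i @ s))
         in lex_enum (leaves R) ! i @ drop (length (lex_enum (leaves L) ! i)) x))"

text \<open>iota(f), defined via any representing tree pair (independent of the choice).\<close>

definition iota :: "((nat \<Rightarrow> bool) \<Rightarrow> (nat \<Rightarrow> bool)) \<Rightarrow> bool list \<Rightarrow> bool list" where
  "iota f = iota_pair (fst (SOME p. represents (fst p) (snd p) f))
                      (snd (SOME p. represents (fst p) (snd p) f))"

definition Sigma_n :: "nat \<Rightarrow> bool list list set" where
  "Sigma_n n = {xs. length xs = n \<and> sorted_wrt lex_less xs}"

end

theory Submission
  imports Defs
begin


fun bv :: "bool list \<Rightarrow> real" where
  "bv [] = 0" | "bv (b#x) = (if b then 1/2 else 0) + bv x / 2"
fun wd :: "bool list \<Rightarrow> real" where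
  "wd [] = 1" | "wd (b#x) = wd x / 2"
definition mid :: "bool list \<Rightarrow> real" where "mid x = bv x + wd x / 2"

lemma wd_pos: "0 < wd x" by (induct x) auto
lemma bv_bounds: "0 \<le> bv x \<and> bv x + wd x \<le> 1" by (induct x) auto
lemma mid_Nil[simp]: "mid [] = 1/2" by (simp add: mid_def)
lemma mid_Cons[simp]: "mid (b#x) = (if b then 1/2 else 0) + mid x/2" by (simp add: mid_def)
lemma mid_bounds: "bv x < mid x \<and> mid x < bv x + wd x"
  using wd_pos[of x] by (simp add: mid_def)
lemma mid_01: "0 < mid x \<and> mid x < 1"
  using mid_bounds[of x] bv_bounds[of x] by linarith

lemma bv_append: "bv (l @ s) = bv l + wd l * bv s" by (induct l) (auto simp: field_simps)
lemma wd_append: "wd (l @ s) = wd l * wd s" by (induct l) auto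
lemma mid_append: "mid (l @ s) = bv l + wd l * mid s"
  by (simp add: mid_def bv_append wd_append field_simps)

lemma ex_first: "(\<exists>k. (\<forall>i<k. p i = q i) \<and> (p k :: nat) < q k) \<longleftrightarrow>
  p 0 < q 0 \<or> (p 0 = q 0 \<and> (\<exists>k. (\<forall>i<k. p (Suc i) = q (Suc i)) \<and> p (Suc k) < q (Suc k)))"
proof
  assume "\<exists>k. (\<forall>i<k. p i = q i) \<and> p k < q k"
  then obtain k where k: "\<forall>i<k. p i = q i" "p k < q k" by blast
  show "p 0 < q 0 \<or> (p 0 = q 0 \<and> (\<exists>k. (\<forall>i<k. p (Suc i) = q (Suc i)) \<and> p (Suc k) < q (Suc k)))"
  proof (cases k)
    case 0 then show ?thesis using k by auto
  next
    case (Suc k') then show ?thesis using k by (intro disjI2 conjI exI[of _ k']) auto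
  qed
next
  assume "p 0 < q 0 \<or> (p 0 = q 0 \<and> (\<exists>k. (\<forall>i<k. p (Suc i) = q (Suc i)) \<and> p (Suc k) < q (Suc k)))"
  then show "\<exists>k. (\<forall>i<k. p i = q i) \<and> p k < q k"
  proof
    assume "p 0 < q 0" then show ?thesis by (intro exI[of _ 0]) auto
  next
    assume "p 0 = q 0 \<and> (\<exists>k. (\<forall>i<k. p (Suc i) = q (Suc i)) \<and> p (Suc k) < q (Suc k))"
    then obtain k where "p 0 = q 0" "\<forall>i<k. p (Suc i) = q (Suc i)" "p (Suc k) < q (Suc k)" by blast
    then show ?thesis by (intro exI[of _ "Suc k"]) (auto simp: less_Suc_eq_0_disj)
  qed
qed

lemma padded_Nil[simp]: "padded [] i = 1" by (simp add: padded_def)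
lemma padded_Cons0[simp]: "padded (b#x) 0 = (if b then 2 else 0)" by (simp add: padded_def)
lemma padded_ConsS[simp]: "padded (b#x) (Suc i) = padded x i" by (simp add: padded_def)

lemma lex_unfold: "lex_less x y \<longleftrightarrow> padded x 0 < padded y 0 \<or> (padded x 0 = padded y 0 \<and>
   (\<exists>k. (\<forall>i<k. padded x (Suc i) = padded y (Suc i)) \<and> padded x (Suc k) < padded y (Suc k)))"
  unfolding lex_less_def by (rule ex_first)

lemma lex_Nil_Nil[simp]: "\<not> lex_less [] []" by (simp add: lex_less_def)
lemma lex_Nil_Cons[simp]: "lex_less [] (b#y) \<longleftrightarrow> b" by (subst lex_unfold) auto
lemma lex_Cons_Nil[simp]: "lex_less (a#x) [] \<longleftrightarrow> \<not> a" by (subst lex_unfold) auto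
lemma lex_Cons_Cons[simp]: "lex_less (a#x) (b#y) \<longleftrightarrow> (\<not> a \<and> b) \<or> (a = b \<and> lex_less x y)"
  by (subst lex_unfold) (auto simp: lex_less_def)

lemma lex_mid: "lex_less x y \<longleftrightarrow> mid x < mid y"
proof (induct x arbitrary: y)
  case Nil then show ?case
  proof (cases y)
    case (Cons b y') then show ?thesis using mid_01[of y'] by auto
  qed auto
next
  case (Cons a x) then show ?case
  proof (cases y)
    case Nil then show ?thesis using mid_01[of x] by auto
  next
    case (Cons b y') then show ?thesis using mid_01[of x] mid_01[of y'] Cons.hyps[of y'] by auto
  qed
qed

lemma mid_inj: "mid x = mid y \<Longrightarrow> x = y"
proof (induct x arbitrary: y)
  case Nil then show ?case
  proof (cases y)
    case (Cons b y') then show ?thesis using Nil mid_01[of y'] by (cases b) auto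
  qed auto
next
  case (Cons a x) then show ?case
  proof (cases y)
    case Nil then show ?thesis using Cons mid_01[of x] by (cases a) auto
  next
    case (Cons b y') then show ?thesis using Cons.prems mid_01[of x] mid_01[of y'] Cons.hyps[of y'] 
      by (cases a; cases b) auto
  qed
qed



lemma lex_irrefl[simp]: "\<not> lex_less x x" by (simp add: lex_mid)
lemma lex_trans: "lex_less x y \<Longrightarrow> lex_less y z \<Longrightarrow> lex_less x z" by (simp add: lex_mid)
lemma lex_asym: "lex_less x y \<Longrightarrow> \<not> lex_less y x" by (simp add: lex_mid)
lemma lex_total: "x \<noteq> y \<Longrightarrow> lex_less x y \<or> lex_less y x"
proof -
  assume "x \<noteq> y"
  then have "mid x \<noteq> mid y" using mid_inj by blast
  then show ?thesis by (auto simp: lex_mid linorder_neq_iff)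
qed

lemma inj_mid: "inj mid" by (auto intro: injI mid_inj)

lemma sorted_lex_map: "sorted_wrt lex_less xs \<longleftrightarrow> sorted_wrt (<) (map mid xs)"
  by (induct xs) (auto simp: lex_mid)

lemma sorted_lex_distinct: "sorted_wrt lex_less xs \<Longrightarrow> distinct xs"
proof -
  assume "sorted_wrt lex_less xs"
  then have "sorted_wrt (<) (map mid xs)" by (simp add: sorted_lex_map)
  then have "distinct (map mid xs)" by (simp add: strict_sorted_iff)
  then show ?thesis by (simp add: distinct_map)
qed

lemma sorted_lex_unique:
  assumes "sorted_wrt lex_less xs" "sorted_wrt lex_less ys" "set xs = set ys"
  shows "xs = ys"
proof -
  have "map mid xs = map mid ys"
    using assms by (intro sorted_distinct_set_unique) (auto simp: sorted_lex_map strict_sorted_iff)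
  then show ?thesis using inj_mid by (simp add: inj_map_eq_map)
qed

lemma sorted_lex_ex: "finite A \<Longrightarrow> \<exists>xs. sorted_wrt lex_less xs \<and> set xs = A"
proof (induct A rule: finite_induct)
  case empty then show ?case by auto
next
  case (insert x A)
  then obtain xs where xs: "sorted_wrt lex_less xs" "set xs = A" by blast
  let ?ys = "filter (\<lambda>z. lex_less z x) xs @ [x] @ filter (\<lambda>z. lex_less x z) xs"
  have "sorted_wrt lex_less ?ys"
    using xs(1) by (auto simp: sorted_wrt_append sorted_wrt_filter intro: lex_trans)
  moreover have "set ?ys = insert x A"
    using xs(2) insert(2) lex_total by auto
  ultimately show ?case by blast
qed

lemma lex_enum_props:
  assumes "finite A"
  shows "sorted_wrt lex_less (lex_enum A) \<and> set (lex_enum A) = A"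
proof -
  have "\<exists>!xs. sorted_wrt lex_less xs \<and> set xs = A"
    using sorted_lex_ex[OF assms] sorted_lex_unique by blast
  then show ?thesis unfolding lex_enum_def by (rule theI')
qed

lemma lex_enum_eq: "sorted_wrt lex_less xs \<Longrightarrow> lex_enum (set xs) = xs"
  using lex_enum_props[of "set xs"] sorted_lex_unique by auto

lemma lex_enum_len: "finite A \<Longrightarrow> length (lex_enum A) = card A"
  using lex_enum_props[of A] sorted_lex_distinct distinct_card by metis

lemma lex_enum_distinct: "finite A \<Longrightarrow> distinct (lex_enum A)"
  using lex_enum_props[of A] sorted_lex_distinct by blast

lemma the_index: "distinct xs \<Longrightarrow> j < length xs \<Longrightarrow> (THE i. i < length xs \<and> xs ! i = xs ! j) = j"
  by (rule the_equality) (auto simp: nth_eq_iff_index_eq)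

lemma rank_sorted:
  assumes "sorted_wrt lex_less xs" "j < length xs"
  shows "card {z \<in> set xs. lex_less z (xs ! j)} = j"
proof -
  have "{z \<in> set xs. lex_less z (xs ! j)} = set (take j xs)"
  proof safe
    fix z assume z: "z \<in> set xs" "lex_less z (xs ! j)"
    then obtain m where m: "m < length xs" "z = xs ! m" by (auto simp: in_set_conv_nth)
    have "m < j"
    proof (rule ccontr)
      assume "\<not> m < j"
      then have "m = j \<or> j < m" by auto
      then show False using z m assms sorted_wrt_nth_less[OF assms(1), of j m] lex_asym by auto
    qed
    then show "z \<in> set (take j xs)" using m by (auto simp: in_set_conv_nth)
  next
    fix z assume "z \<in> set (take j xs)"
    then show "z \<in> set xs" by (meson in_set_takeD)
  next
    fix z assume "z \<in> set (take j xs)"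
    then obtain m where "m < j" "z = xs ! m" using assms(2) by (auto simp: in_set_conv_nth)
    then show "lex_less z (xs ! j)" using sorted_wrt_nth_less[OF assms(1)] assms(2) by auto
  qed
  moreover have "distinct (take j xs)" using sorted_lex_distinct[OF assms(1)] by simp
  ultimately show ?thesis using assms(2) by (simp add: distinct_card)
qed

section \<open>Values of infinite sequences\<close>

definition val :: "(nat \<Rightarrow> bool) \<Rightarrow> real" where
  "val \<omega> = (\<Sum>n. (if \<omega> n then 1 else 0) * (1/2)^Suc n)"

lemma geo_sums: "(\<lambda>n. (1/2::real)^Suc n) sums 1"
proof -
  have "(\<lambda>n. (1/2::real)^n) sums 2" using geometric_sums[of "1/2::real"] by simp
  then have "(\<lambda>n. 1/2 * (1/2::real)^n) sums (1/2 * 2)" by (rule sums_mult)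
  then show ?thesis by simp
qed

lemma val_summable: "summable (\<lambda>n. (if \<omega> n then 1 else 0) * (1/2::real)^Suc n)"
  by (rule summable_comparison_test[OF _ sums_summable[OF geo_sums]]) auto

lemma val_ge0: "0 \<le> val \<omega>"
  unfolding val_def by (rule suminf_nonneg[OF val_summable]) auto

lemma val_le1: "val \<omega> \<le> 1"
proof -
  have "val \<omega> \<le> (\<Sum>n. (1/2::real)^Suc n)"
    unfolding val_def by (rule suminf_le[OF _ val_summable sums_summable[OF geo_sums]]) auto
  then show ?thesis using sums_unique[OF geo_sums] by simp
qed

lemma val_zero: "val (\<lambda>_. False) = 0" by (simp add: val_def)

lemma val_lt1: assumes "\<not> \<omega> n" shows "val \<omega> < 1"
proof -
  let ?a = "\<lambda>m. (if \<omega> m then 1 else 0) * (1/2::real)^Suc m"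
  let ?b = "\<lambda>m. if m = n then (1/2::real)^Suc n else 0"
  have s1: "(\<lambda>m. ?a m + ?b m) sums (val \<omega> + (1/2)^Suc n)"
    unfolding val_def by (intro sums_add summable_sums[OF val_summable])
      (use sums_single[of n "\<lambda>_. (1/2::real)^Suc n"] in simp)
  have "val \<omega> + (1/2)^Suc n \<le> 1"
    by (rule sums_le[OF _ s1 geo_sums]) (use assms in auto)
  moreover have "(0::real) < (1/2)^Suc n" by simp
  ultimately show ?thesis by linarith
qed

lemma val_split: "val \<omega> = (if \<omega> 0 then 1/2 else 0) + val (\<lambda>n. \<omega> (Suc n)) / 2"
proof -
  have "(\<Sum>n. (if \<omega> (Suc n) then 1 else 0) * (1/2::real)^Suc (Suc n)) =
     val \<omega> - (if \<omega> 0 then 1 else 0) * (1/2)^Suc 0"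
    unfolding val_def by (rule suminf_split_head[OF val_summable])
  moreover have "(\<Sum>n. (if \<omega> (Suc n) then 1 else 0) * (1/2::real)^Suc (Suc n)) =
      (\<Sum>n. (if \<omega> (Suc n) then 1 else 0) * (1/2::real)^Suc n) / 2"
    using suminf_divide[OF val_summable[of "\<lambda>n. \<omega> (Suc n)"], of 2] by (simp add: field_simps)
  ultimately show ?thesis unfolding val_def[of "\<lambda>n. \<omega> (Suc n)"] by auto
qed

lemma cat_Cons0[simp]: "cat (b#l) \<omega> 0 = b" by (simp add: cat_def)
lemma cat_ConsS[simp]: "cat (b#l) \<omega> (Suc n) = cat l \<omega> n" by (simp add: cat_def)
lemma cat_Nil[simp]: "cat [] \<omega> = \<omega>" by (simp add: cat_def)
lemma cat_append: "cat (l @ s) \<omega> = cat l (cat s \<omega>)"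
  by (auto simp: cat_def nth_append fun_eq_iff)

lemma val_cat: "val (cat l \<omega>) = bv l + wd l * val \<omega>"
proof (induct l)
  case Nil then show ?case by simp
next
  case (Cons b l)
  have "val (cat (b#l) \<omega>) = (if b then 1/2 else 0) + val (cat l \<omega>) / 2"
    by (subst val_split) simp
  then show ?case using Cons by (simp add: field_simps)
qed

lemma val_mid: "val (cat (x @ [True]) (\<lambda>_. False)) = mid x"
  by (simp add: val_cat val_zero bv_append wd_append mid_def)



section \<open>Trees\<close>

lemma tree_finite: "is_tree T \<Longrightarrow> finite T" by (simp add: is_tree_def)
lemma tree_Nil: "is_tree T \<Longrightarrow> [] \<in> T" by (simp add: is_tree_def)
lemma tree_prefix: "is_tree T \<Longrightarrow> x @ s \<in> T \<Longrightarrow> x \<in> T" unfolding is_tree_def by blast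
lemma tree_child: "is_tree T \<Longrightarrow> x \<in> T \<Longrightarrow> (x @ [False] \<in> T) = (x @ [True] \<in> T)"
  by (simp add: is_tree_def)

lemma leaves_iff: "is_tree T \<Longrightarrow> x \<in> leaves T \<longleftrightarrow> x \<in> T \<and> x @ [False] \<notin> T"
  using tree_child[of T x] by (auto simp: leaves_def)
lemma nodes_iff: "is_tree T \<Longrightarrow> x \<in> nodes T \<longleftrightarrow> x \<in> T \<and> x @ [False] \<in> T"
  using tree_child[of T x] by (auto simp: leaves_def nodes_def)
lemma nodes_iff': "is_tree T \<Longrightarrow> x \<in> nodes T \<longleftrightarrow> x @ [False] \<in> T"
  using nodes_iff tree_prefix by blast

lemma leaves_finite: "is_tree T \<Longrightarrow> finite (leaves T)"
  using tree_finite by (auto simp: leaves_def)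
lemma nodes_finite: "is_tree T \<Longrightarrow> finite (nodes T)"
  using tree_finite by (auto simp: nodes_def)
lemma leaves_nodes_disj: "x \<in> leaves T \<Longrightarrow> x \<notin> nodes T" by (simp add: nodes_def)

lemma leaf_prefix_free: "is_tree T \<Longrightarrow> l \<in> leaves T \<Longrightarrow> l @ s \<in> T \<Longrightarrow> s = []"
proof (cases s)
  case (Cons b s')
  assume "is_tree T" "l \<in> leaves T" "l @ s \<in> T"
  then have "(l @ [b]) @ s' \<in> T" using Cons by simp
  then have "l @ [b] \<in> T" using \<open>is_tree T\<close> tree_prefix by blast
  then show ?thesis using \<open>l \<in> leaves T\<close> by (cases b) (auto simp: leaves_def)
qed

definition node2 :: "bool list set \<Rightarrow> bool list set \<Rightarrow> bool list set" where
  "node2 T0 T1 = insert [] (Cons False ` T0 \<union> Cons True ` T1)"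

lemma Cons_eq_append_iff: "b # x = y @ s \<longleftrightarrow> (y = [] \<and> s = b # x) \<or> (\<exists>y'. y = b # y' \<and> x = y' @ s)"
  by (cases y) auto

lemma node2_tree:
  assumes "is_tree T0" "is_tree T1"
  shows "is_tree (node2 T0 T1)"
  unfolding is_tree_def
proof (intro conjI allI impI ballI)
  show "finite (node2 T0 T1)" using assms tree_finite by (simp add: node2_def)
  show "[] \<in> node2 T0 T1" by (simp add: node2_def)
  fix x s assume "x @ s \<in> node2 T0 T1"
  then show "x \<in> node2 T0 T1"
    using assms tree_prefix[of T0] tree_prefix[of T1] by (cases x) (auto simp: node2_def)
next
  fix x assume "x \<in> node2 T0 T1"
  then show "(x @ [False] \<in> node2 T0 T1) = (x @ [True] \<in> node2 T0 T1)"
    using assms tree_child[of T0] tree_child[of T1] tree_Nil[of T0] tree_Nil[of T1]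
    by (cases x) (auto simp: node2_def)
qed

lemma node2_leaves:
  assumes "is_tree T0" "is_tree T1"
  shows "leaves (node2 T0 T1) = Cons False ` leaves T0 \<union> Cons True ` leaves T1"
  using assms tree_Nil[of T0] by (auto simp: leaves_def node2_def)

lemma node2_nodes:
  assumes "is_tree T0" "is_tree T1"
  shows "nodes (node2 T0 T1) = insert [] (Cons False ` nodes T0 \<union> Cons True ` nodes T1)"
  using assms tree_Nil[of T0] by (auto simp: leaves_def nodes_def node2_def)

lemma leaves_single: "leaves {[]} = {[]}" by (auto simp: leaves_def)
lemma nodes_single: "nodes {[]} = {}" by (auto simp: leaves_def nodes_def)
lemma tree_single: "is_tree {[]}" by (auto simp: is_tree_def)

lemma tree_induct[consumes 1, case_names single node2]:
  assumes "is_tree T" "P {[]}"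
    "\<And>T0 T1. is_tree T0 \<Longrightarrow> is_tree T1 \<Longrightarrow> P T0 \<Longrightarrow> P T1 \<Longrightarrow> P (node2 T0 T1)"
  shows "P T"
  using assms(1)
proof (induct "card T" arbitrary: T rule: less_induct)
  case (less T)
  show ?case
  proof (cases "[False] \<in> T")
    case False
    have "T = {[]}"
    proof safe
      fix x assume "x \<in> T"
      show "x = []"
      proof (cases x)
        case (Cons b x')
        then have "[b] \<in> T" using \<open>x \<in> T\<close> tree_prefix[OF less.prems, of "[b]" x'] by simp
        then show ?thesis using False tree_child[OF less.prems tree_Nil[OF less.prems]] by (cases b) auto
      qed
    next
      show "[] \<in> T" using tree_Nil[OF less.prems] .
    qed
    then show ?thesis using assms(2) by simp
  next
    case True
    define T0 where "T0 = {x. False # x \<in> T}"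
    define T1 where "T1 = {x. True # x \<in> T}"
    have T: "T = node2 T0 T1"
      unfolding node2_def T0_def T1_def using tree_Nil[OF less.prems]
      by (auto simp: image_def) (metis list.exhaust)
    have fin: "finite T" using less.prems tree_finite by blast
    have "[True] \<in> T" using True tree_child[OF less.prems tree_Nil[OF less.prems]] by simp
    have tr: "is_tree T0" "is_tree T1"
      unfolding is_tree_def T0_def T1_def
      using less.prems True \<open>[True] \<in> T\<close>
        finite_vimageI[OF fin, of "Cons False"] finite_vimageI[OF fin, of "Cons True"]
      by (auto simp: is_tree_def vimage_def)
    have c0: "card T0 < card T"
    proof -
      have "Cons False ` T0 \<subseteq> T - {[]}" by (auto simp: T0_def)
      then have "card (Cons False ` T0) \<le> card (T - {[]})" by (intro card_mono) (use fin in auto)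
      moreover have "card (Cons False ` T0) = card T0" by (simp add: card_image)
      moreover have "card (T - {[]}) < card T" by (rule card_Diff1_less[OF fin tree_Nil[OF less.prems]])
      ultimately show ?thesis by linarith
    qed
    have c1: "card T1 < card T"
    proof -
      have "Cons True ` T1 \<subseteq> T - {[]}" by (auto simp: T1_def)
      then have "card (Cons True ` T1) \<le> card (T - {[]})" by (intro card_mono) (use fin in auto)
      moreover have "card (Cons True ` T1) = card T1" by (simp add: card_image)
      moreover have "card (T - {[]}) < card T" by (rule card_Diff1_less[OF fin tree_Nil[OF less.prems]])
      ultimately show ?thesis by linarith
    qed
    show ?thesis using assms(3)[OF tr less.hyps[OF c0 tr(1)] less.hyps[OF c1 tr(2)]] T by simp
  qed
qed



fun tiles :: "real \<Rightarrow> real \<Rightarrow> bool list list \<Rightarrow> bool" where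
  "tiles a b [] = False"
| "tiles a b (l # ls) = (bv l = a \<and> (if ls = [] then bv l + wd l = b else tiles (bv l + wd l) b ls))"

lemma tiles_ne: "tiles a b xs \<Longrightarrow> xs \<noteq> [] \<and> bv (xs ! 0) = a"
  by (cases xs) auto

lemma tiles_append: "tiles a b xs \<Longrightarrow> tiles b c ys \<Longrightarrow> tiles a c (xs @ ys)"
proof (induct xs arbitrary: a)
  case Nil then show ?case by simp
next
  case (Cons x xs) then show ?case using tiles_ne[of b c ys] by (cases xs) auto
qed

lemma tiles_map: "tiles a b xs \<Longrightarrow>
  tiles ((if d then 1/2 else 0) + a/2) ((if d then 1/2 else 0) + b/2) (map (Cons d) xs)"
proof (induct xs arbitrary: a)
  case Nil then show ?case by simp
next
  case (Cons x xs) then show ?case by (cases xs) (auto simp: field_simps)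
qed

lemma tiles_nth: "tiles a b xs \<Longrightarrow> Suc i < length xs \<Longrightarrow> bv (xs ! Suc i) = bv (xs ! i) + wd (xs ! i)"
proof (induct xs arbitrary: a i)
  case Nil then show ?case by simp
next
  case (Cons x xs) then show ?case
    using tiles_ne[of "bv x + wd x" b xs] by (cases i) (auto split: if_splits)
qed

lemma tiles_le: "tiles a b xs \<Longrightarrow> i < j \<Longrightarrow> j < length xs \<Longrightarrow> bv (xs ! i) + wd (xs ! i) \<le> bv (xs ! j)"
proof (induct j)
  case 0 then show ?case by simp
next
  case (Suc j)
  show ?case
  proof (cases "i = j")
    case True then show ?thesis using tiles_nth[OF Suc(2), of j] Suc by simp
  next
    case False
    then have "bv (xs ! i) + wd (xs ! i) \<le> bv (xs ! j)" using Suc by auto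
    then show ?thesis using tiles_nth[OF Suc(2), of j] Suc wd_pos[of "xs ! j"] by simp
  qed
qed

lemma tiles_lt: "tiles a b xs \<Longrightarrow> Suc i < j \<Longrightarrow> j < length xs \<Longrightarrow> bv (xs ! i) + wd (xs ! i) < bv (xs ! j)"
proof -
  assume a: "tiles a b xs" "Suc i < j" "j < length xs"
  then obtain j' where j: "j = Suc j'" "i < j'" by (cases j) auto
  then have "bv (xs ! i) + wd (xs ! i) \<le> bv (xs ! j')" using tiles_le[OF a(1)] a by auto
  then show ?thesis using tiles_nth[OF a(1), of j'] j a wd_pos[of "xs ! j'"] by simp
qed

lemma tiles_bv_mono: "tiles a b xs \<Longrightarrow> i < j \<Longrightarrow> j < length xs \<Longrightarrow> bv (xs ! i) < bv (xs ! j)"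
  using tiles_le[of a b xs i j] wd_pos[of "xs ! i"] by simp

abbreviation LE where "LE T \<equiv> lex_enum (leaves T)"
abbreviation NE where "NE T \<equiv> lex_enum (nodes T)"

lemma sorted_map_Cons: "sorted_wrt lex_less (map (Cons d) xs) \<longleftrightarrow> sorted_wrt lex_less xs"
  by (induct xs) auto

lemma LE_props: "is_tree T \<Longrightarrow> sorted_wrt lex_less (LE T) \<and> set (LE T) = leaves T"
  by (rule lex_enum_props[OF leaves_finite])
lemma NE_props: "is_tree T \<Longrightarrow> sorted_wrt lex_less (NE T) \<and> set (NE T) = nodes T"
  by (rule lex_enum_props[OF nodes_finite])

lemma LE_node2: assumes "is_tree T0" "is_tree T1"
  shows "LE (node2 T0 T1) = map (Cons False) (LE T0) @ map (Cons True) (LE T1)"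
proof -
  have "sorted_wrt lex_less (map (Cons False) (LE T0) @ map (Cons True) (LE T1))"
    using LE_props[OF assms(1)] LE_props[OF assms(2)] by (auto simp: sorted_wrt_append sorted_map_Cons)
  moreover have "set (map (Cons False) (LE T0) @ map (Cons True) (LE T1)) = leaves (node2 T0 T1)"
    using LE_props[OF assms(1)] LE_props[OF assms(2)] node2_leaves[OF assms] by auto
  ultimately show ?thesis using lex_enum_eq by metis
qed

lemma NE_node2: assumes "is_tree T0" "is_tree T1"
  shows "NE (node2 T0 T1) = map (Cons False) (NE T0) @ [[]] @ map (Cons True) (NE T1)"
proof -
  have "sorted_wrt lex_less (map (Cons False) (NE T0) @ [[]] @ map (Cons True) (NE T1))"
    using NE_props[OF assms(1)] NE_props[OF assms(2)] by (auto simp: sorted_wrt_append sorted_map_Cons)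
  moreover have "set (map (Cons False) (NE T0) @ [[]] @ map (Cons True) (NE T1)) = nodes (node2 T0 T1)"
    using NE_props[OF assms(1)] NE_props[OF assms(2)] node2_nodes[OF assms] by auto
  ultimately show ?thesis using lex_enum_eq by metis
qed

lemma LE_single: "LE {[]} = [[]]"
  using lex_enum_eq[of "[[]]"] by (simp add: leaves_single)
lemma NE_single: "NE {[]} = []"
  using lex_enum_eq[of "[]"] by (simp add: nodes_single)

lemma leaves_tiles: "is_tree T \<Longrightarrow> tiles 0 1 (LE T)"
proof (induct T rule: tree_induct)
  case single then show ?case by (simp add: LE_single)
next
  case (node2 T0 T1)
  have "tiles 0 (1/2) (map (Cons False) (LE T0))" using tiles_map[OF node2(3), of False] by simp
  moreover have "tiles (1/2) 1 (map (Cons True) (LE T1))" using tiles_map[OF node2(4), of True] by simp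
  ultimately show ?case by (simp add: LE_node2[OF node2(1,2)] tiles_append)
qed

lemma nodes_leaves_mid: "is_tree T \<Longrightarrow> map mid (NE T) = tl (map bv (LE T))"
proof (induct T rule: tree_induct)
  case single then show ?case by (simp add: LE_single NE_single)
next
  case (node2 T0 T1)
  have t0: "LE T0 \<noteq> []" using tiles_ne[OF leaves_tiles[OF node2(1)]] by simp
  have t1: "LE T1 \<noteq> []" "bv (LE T1 ! 0) = 0" using tiles_ne[OF leaves_tiles[OF node2(2)]] by auto
  obtain y ys where y: "LE T1 = y # ys" using t1 by (cases "LE T1") auto
  obtain z zs where z: "LE T0 = z # zs" using t0 by (cases "LE T0") auto
  have by0: "bv y = 0" using t1 y by simp
  have i0: "map mid (NE T0) = map bv zs" using node2(3) z by simp
  have i1: "map mid (NE T1) = map bv ys" using node2(4) y by simp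
  have lhs: "map mid (NE (node2 T0 T1)) = map (\<lambda>r. r/2) (map mid (NE T0)) @ [1/2] @ map (\<lambda>r. 1/2 + r/2) (map mid (NE T1))"
    unfolding NE_node2[OF node2(1,2)] by (simp add: comp_def)
  have rhs: "tl (map bv (LE (node2 T0 T1))) = map (\<lambda>r. r/2) (map bv zs) @ map (\<lambda>r. 1/2+r/2) (map bv (y#ys))"
    unfolding LE_node2[OF node2(1,2)] z y by (simp add: comp_def)
  show ?case unfolding lhs rhs i0 i1 using by0 by simp
qed

definition pref :: "bool list \<Rightarrow> (nat \<Rightarrow> bool) \<Rightarrow> bool" where
  "pref l \<omega> \<longleftrightarrow> (\<forall>j<length l. \<omega> j = l ! j)"

lemma pref_cat[simp]: "pref l (cat l \<alpha>) " by (simp add: pref_def cat_def)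
lemma cat_pref: "pref l \<omega> \<Longrightarrow> cat l (\<lambda>n. \<omega> (n + length l)) = \<omega>"
  by (auto simp: pref_def cat_def fun_eq_iff)
lemma shift_cat[simp]: "(\<lambda>n. cat l \<alpha> (n + length l)) = \<alpha>"
  by (auto simp: cat_def fun_eq_iff)

lemma leaf_of_seq: "is_tree T \<Longrightarrow> \<exists>l\<in>leaves T. pref l \<omega>"
proof (induct T arbitrary: \<omega> rule: tree_induct)
  case single then show ?case by (auto simp: leaves_single pref_def)
next
  case (node2 T0 T1)
  show ?case
  proof (cases "\<omega> 0")
    case True
    obtain l where "l \<in> leaves T1" "pref l (\<lambda>n. \<omega> (Suc n))" using node2(4) by blast
    then show ?thesis using True node2_leaves[OF node2(1,2)]
      by (intro bexI[of _ "True # l"]) (auto simp: pref_def less_Suc_eq_0_disj)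
  next
    case False
    obtain l where "l \<in> leaves T0" "pref l (\<lambda>n. \<omega> (Suc n))" using node2(3) by blast
    then show ?thesis using False node2_leaves[OF node2(1,2)]
      by (intro bexI[of _ "False # l"]) (auto simp: pref_def less_Suc_eq_0_disj)
  qed
qed

lemma leaf_of_word: "is_tree T \<Longrightarrow> x \<notin> nodes T \<Longrightarrow> \<exists>l\<in>leaves T. \<exists>s. x = l @ s"
proof (induct T arbitrary: x rule: tree_induct)
  case single then show ?case by (auto simp: leaves_single)
next
  case (node2 T0 T1)
  obtain b x' where x: "x = b # x'" using node2(5) node2_nodes[OF node2(1,2)] by (cases x) auto
  show ?case
  proof (cases b)
    case True
    then have "x' \<notin> nodes T1" using node2(5) x node2_nodes[OF node2(1,2)] by auto
    then obtain l s where "l \<in> leaves T1" "x' = l @ s" using node2(4) by blast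
    then show ?thesis using True x node2_leaves[OF node2(1,2)] by (intro bexI[of _ "True # l"]) auto
  next
    case False
    then have "x' \<notin> nodes T0" using node2(5) x node2_nodes[OF node2(1,2)] by auto
    then obtain l s where "l \<in> leaves T0" "x' = l @ s" using node2(3) by blast
    then show ?thesis using False x node2_leaves[OF node2(1,2)] by (intro bexI[of _ "False # l"]) auto
  qed
qed

lemma pref_unique_aux: "is_tree T \<Longrightarrow> l \<in> leaves T \<Longrightarrow> l' \<in> leaves T \<Longrightarrow> pref l \<omega> \<Longrightarrow> pref l' \<omega>
   \<Longrightarrow> length l \<le> length l' \<Longrightarrow> l = l'"
proof -
  assume a: "is_tree T" "l \<in> leaves T" "l' \<in> leaves T" "pref l \<omega>" "pref l' \<omega>" "length l \<le> length l'"
  have "take (length l) l' = l"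
    using a by (intro nth_equalityI) (auto simp: pref_def)
  then have e: "l' = l @ drop (length l) l'" by (metis append_take_drop_id)
  have "l' \<in> T" using a(3) by (simp add: leaves_def)
  then have "l @ drop (length l) l' \<in> T" using e by simp
  then have "drop (length l) l' = []" using leaf_prefix_free[OF a(1,2)] by blast
  then show ?thesis using e by simp
qed

lemma pref_unique: "is_tree T \<Longrightarrow> l \<in> leaves T \<Longrightarrow> l' \<in> leaves T \<Longrightarrow> pref l \<omega> \<Longrightarrow> pref l' \<omega> \<Longrightarrow> l = l'"
proof (cases "length l \<le> length l'")
  case True then show "is_tree T \<Longrightarrow> l \<in> leaves T \<Longrightarrow> l' \<in> leaves T \<Longrightarrow> pref l \<omega> \<Longrightarrow> pref l' \<omega> \<Longrightarrow> l = l'"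
    using pref_unique_aux[of T l l' \<omega>] by blast
next
  case False then show "is_tree T \<Longrightarrow> l \<in> leaves T \<Longrightarrow> l' \<in> leaves T \<Longrightarrow> pref l \<omega> \<Longrightarrow> pref l' \<omega> \<Longrightarrow> l = l'"
    using pref_unique_aux[of T l' l \<omega>] by simp
qed

lemma word_pref_unique: "is_tree T \<Longrightarrow> l \<in> leaves T \<Longrightarrow> l' \<in> leaves T \<Longrightarrow> l @ s = l' @ s' \<Longrightarrow> l = l'"
proof -
  assume a: "is_tree T" "l \<in> leaves T" "l' \<in> leaves T" "l @ s = l' @ s'"
  then obtain us where "l = l' @ us \<or> l @ us = l'" by (auto simp: append_eq_append_conv2)
  then show ?thesis
  proof
    assume h: "l = l' @ us"
    have "l \<in> T" using a(2) by (simp add: leaves_def)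
    then have "us = []" using leaf_prefix_free[OF a(1,3), of us] h by simp
    then show ?thesis using h by simp
  next
    assume h: "l @ us = l'"
    have "l' \<in> T" using a(3) by (simp add: leaves_def)
    then have "us = []" using leaf_prefix_free[OF a(1,2), of us] h by simp
    then show ?thesis using h by simp
  qed
qed



lemma rep_facts:
  assumes "represents L R f"
  shows "is_tree L" "is_tree R" "length (LE L) = length (LE R)"
    "\<And>i \<alpha>. i < length (LE L) \<Longrightarrow> f (cat (LE L ! i) \<alpha>) = cat (LE R ! i) \<alpha>"
  using assms lex_enum_len[OF leaves_finite, of L] lex_enum_len[OF leaves_finite, of R]
  by (auto simp: represents_def)

lemma seq_index: "is_tree T \<Longrightarrow> \<exists>i<length (LE T). pref (LE T ! i) \<omega>"
  using leaf_of_seq[of T \<omega>] LE_props[of T] by (metis in_set_conv_nth)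

lemma NE_len: "is_tree T \<Longrightarrow> length (NE T) = length (LE T) - 1"
  using arg_cong[OF nodes_leaves_mid, of T length] by simp

lemma NE_mid: "is_tree T \<Longrightarrow> j < length (NE T) \<Longrightarrow> mid (NE T ! j) = bv (LE T ! Suc j)"
proof -
  assume a: "is_tree T" "j < length (NE T)"
  have "map mid (NE T) ! j = tl (map bv (LE T)) ! j" using nodes_leaves_mid[OF a(1)] by simp
  then show ?thesis using a NE_len[OF a(1)] by (simp add: nth_tl)
qed

lemma LE_ne: "is_tree T \<Longrightarrow> LE T \<noteq> []" using tiles_ne[OF leaves_tiles] by blast

lemma iota_char:
  assumes rep: "represents L R f"
  shows "mid (iota_pair L R x) = val (f (cat (x @ [True]) (\<lambda>_. False)))"
proof -
  note rf = rep_facts[OF rep]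
  define \<omega>0 where "\<omega>0 = cat (x @ [True]) (\<lambda>_. False)"
  have tL: "tiles 0 1 (LE L)" and tR: "tiles 0 1 (LE R)" using leaves_tiles rf by auto
  have vx: "val \<omega>0 = mid x" unfolding \<omega>0_def by (rule val_mid)
  show ?thesis
  proof (cases "x \<in> nodes L")
    case True
    then obtain j where j: "j < length (NE L)" "NE L ! j = x"
      using NE_props[OF rf(1)] by (metis in_set_conv_nth)
    have dist: "distinct (NE L)" using lex_enum_distinct[OF nodes_finite[OF rf(1)]] .
    have th: "(THE i. i < length (NE L) \<and> NE L ! i = x) = j" using the_index[OF dist j(1)] j(2) by simp
    have io: "iota_pair L R x = NE R ! j"
      unfolding iota_pair_def if_P[OF True] th by (rule refl)
    obtain m where m: "m < length (LE L)" "pref (LE L ! m) \<omega>0" using seq_index[OF rf(1)] by blast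
    define \<alpha> where "\<alpha> = (\<lambda>n. \<omega>0 (n + length (LE L ! m)))"
    have om: "\<omega>0 = cat (LE L ! m) \<alpha>" unfolding \<alpha>_def using cat_pref[OF m(2)] by simp
    have v1: "val \<omega>0 = bv (LE L ! Suc j)" using vx NE_mid[OF rf(1) j(1)] j(2) by simp
    have v2: "val \<omega>0 = bv (LE L ! m) + wd (LE L ! m) * val \<alpha>" using om val_cat by simp
    have sj: "Suc j < length (LE L)" using j(1) NE_len[OF rf(1)] by simp
    have va: "0 \<le> val \<alpha>" "val \<alpha> \<le> 1" using val_ge0 val_le1 by auto
    have wp: "0 < wd (LE L ! m)" by (rule wd_pos)
    have "wd (LE L ! m) * val \<alpha> \<le> wd (LE L ! m)" using va wp by simp
    have "m = Suc j"
    proof (rule ccontr)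
      assume ne: "m \<noteq> Suc j"
      consider "m < j" | "m = j" | "Suc j < m" using ne by linarith
      then show False
      proof cases
        case 1
        have "bv (LE L ! m) + wd (LE L ! m) < bv (LE L ! Suc j)" using tiles_lt[OF tL _ sj] 1 by simp
        then show False using v1 v2 \<open>wd (LE L ! m) * val \<alpha> \<le> wd (LE L ! m)\<close> by linarith
      next
        case 2
        have "bv (LE L ! Suc j) = bv (LE L ! m) + wd (LE L ! m)" using tiles_nth[OF tL sj] 2 by simp
        then have "wd (LE L ! m) * val \<alpha> = wd (LE L ! m) * 1" using v1 v2 by simp
        then have "val \<alpha> = 1" using wp by simp
        moreover have "\<not> \<alpha> (Suc (length x))" unfolding \<alpha>_def \<omega>0_def by (simp add: cat_def)
        ultimately show False using val_lt1[of \<alpha> "Suc (length x)"] by simp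
      next
        case 3
        have "bv (LE L ! Suc j) + wd (LE L ! Suc j) \<le> bv (LE L ! m)" using tiles_le[OF tL 3 m(1)] .
        moreover have "0 \<le> wd (LE L ! m) * val \<alpha>" using va wp by simp
        ultimately show False using v1 v2 wd_pos[of "LE L ! Suc j"] by linarith
      qed
    qed
    then have "wd (LE L ! m) * val \<alpha> = 0" using v1 v2 by simp
    then have a0: "val \<alpha> = 0" using wp by simp
    have "f \<omega>0 = cat (LE R ! Suc j) \<alpha>" using om rf(4) m(1) \<open>m = Suc j\<close> by simp
    then have "val (f \<omega>0) = bv (LE R ! Suc j)" using a0 val_cat by simp
    moreover have "j < length (NE R)" using j(1) NE_len rf by simp
    ultimately show ?thesis using io NE_mid[OF rf(2)] \<omega>0_def by simp
  next
    case False
    obtain l s where ls: "l \<in> leaves L" "x = l @ s" using leaf_of_word[OF rf(1) False] by blast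
    obtain i where i: "i < length (LE L)" "LE L ! i = l" using ls(1) LE_props[OF rf(1)] by (metis in_set_conv_nth)
    have dist: "distinct (LE L)" using lex_enum_distinct[OF leaves_finite[OF rf(1)]] .
    have th: "(THE i. i < length (LE L) \<and> (\<exists>s. x = LE L ! i @ s)) = i"
    proof (rule the_equality)
      show "i < length (LE L) \<and> (\<exists>s. x = LE L ! i @ s)" using i ls by auto
    next
      fix i' assume "i' < length (LE L) \<and> (\<exists>s. x = LE L ! i' @ s)"
      then obtain s' where i': "i' < length (LE L)" "x = LE L ! i' @ s'" by blast
      have "LE L ! i' \<in> leaves L" using i'(1) LE_props[OF rf(1)] nth_mem by blast
      then have "LE L ! i' = LE L ! i" using word_pref_unique[OF rf(1) _ ls(1)] i'(2) ls(2) i(2) by metis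
      then show "i' = i" using nth_eq_iff_index_eq[OF dist i'(1) i(1)] by simp
    qed
    have io: "iota_pair L R x = LE R ! i @ s"
      unfolding iota_pair_def if_not_P[OF False] Let_def th using ls i by simp
    have "\<omega>0 = cat (LE L ! i) (cat (s @ [True]) (\<lambda>_. False))" unfolding \<omega>0_def using ls i by (simp add: cat_append)
    then have "f \<omega>0 = cat (LE R ! i) (cat (s @ [True]) (\<lambda>_. False))" using rf(4)[OF i(1)] by simp
    then have "val (f \<omega>0) = bv (LE R ! i) + wd (LE R ! i) * mid s" by (simp add: val_cat val_zero bv_append wd_append mid_def)
    then show ?thesis using io mid_append \<omega>0_def by simp
  qed
qed

lemma f_mono:
  assumes rep: "represents L R f" and lt: "val \<omega> < val \<omega>'"
  shows "val (f \<omega>) < val (f \<omega>')"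
proof -
  note rf = rep_facts[OF rep]
  have tL: "tiles 0 1 (LE L)" and tR: "tiles 0 1 (LE R)" using leaves_tiles rf by auto
  obtain i where i: "i < length (LE L)" "pref (LE L ! i) \<omega>" using seq_index[OF rf(1)] by blast
  obtain j where j: "j < length (LE L)" "pref (LE L ! j) \<omega>'" using seq_index[OF rf(1)] by blast
  define \<alpha> where "\<alpha> = (\<lambda>n. \<omega> (n + length (LE L ! i)))"
  define \<beta> where "\<beta> = (\<lambda>n. \<omega>' (n + length (LE L ! j)))"
  have o1: "\<omega> = cat (LE L ! i) \<alpha>" unfolding \<alpha>_def using cat_pref[OF i(2)] by simp
  have o2: "\<omega>' = cat (LE L ! j) \<beta>" unfolding \<beta>_def using cat_pref[OF j(2)] by simp
  have f1: "val (f \<omega>) = bv (LE R ! i) + wd (LE R ! i) * val \<alpha>" using o1 rf(4)[OF i(1)] val_cat by simp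
  have f2: "val (f \<omega>') = bv (LE R ! j) + wd (LE R ! j) * val \<beta>" using o2 rf(4)[OF j(1)] val_cat by simp
  have g1: "val \<omega> = bv (LE L ! i) + wd (LE L ! i) * val \<alpha>" using o1 val_cat by simp
  have g2: "val \<omega>' = bv (LE L ! j) + wd (LE L ! j) * val \<beta>" using o2 val_cat by simp
  have va: "0 \<le> val \<alpha>" "val \<alpha> \<le> 1" "0 \<le> val \<beta>" "val \<beta> \<le> 1" using val_ge0 val_le1 by auto
  have wL: "0 < wd (LE L ! i)" "0 < wd (LE L ! j)" and wR: "0 < wd (LE R ! i)" "0 < wd (LE R ! j)"
    using wd_pos by auto
  have i': "i < length (LE R)" and j': "j < length (LE R)" using i j rf(3) by auto
  have bd1: "wd (LE R ! i) * val \<alpha> \<le> wd (LE R ! i)" "wd (LE L ! i) * val \<alpha> \<le> wd (LE L ! i)"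
    using va wL wR by auto
  have bd2: "0 \<le> wd (LE R ! j) * val \<beta>" "0 \<le> wd (LE L ! j) * val \<beta>" using va wL wR by auto
  consider "i = j" | "j < i" | "j = Suc i" | "Suc i < j" by linarith
  then show ?thesis
  proof cases
    case 1
    then have "wd (LE L ! i) * val \<alpha> < wd (LE L ! i) * val \<beta>" using g1 g2 lt by simp
    then have "val \<alpha> < val \<beta>" using wL(1) by simp
    then show ?thesis using f1 f2 1 wR by simp
  next
    case 2
    have "bv (LE L ! j) + wd (LE L ! j) \<le> bv (LE L ! i)" using tiles_le[OF tL 2 i(1)] .
    moreover have "wd (LE L ! j) * val \<beta> \<le> wd (LE L ! j)" using va wL by simp
    moreover have "0 \<le> wd (LE L ! i) * val \<alpha>" using va wL by simp
    ultimately have False using g1 g2 lt by linarith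
    then show ?thesis ..
  next
    case 3
    have eL: "bv (LE L ! j) = bv (LE L ! i) + wd (LE L ! i)" using tiles_nth[OF tL, of i] 3 j by simp
    have eR: "bv (LE R ! j) = bv (LE R ! i) + wd (LE R ! i)" using tiles_nth[OF tR, of i] 3 j' by simp
    show ?thesis
    proof (cases "val \<alpha> < 1")
      case True
      then have "wd (LE R ! i) * val \<alpha> < wd (LE R ! i)" using wR by simp
      then show ?thesis using f1 f2 eR bd2 by linarith
    next
      case False
      then have "val \<alpha> = 1" using va by simp
      then have "0 < wd (LE L ! j) * val \<beta>" using g1 g2 eL lt by simp
      then have "0 < val \<beta>" using wL by (simp add: zero_less_mult_iff)
      then have "0 < wd (LE R ! j) * val \<beta>" using wR by simp
      then show ?thesis using f1 f2 eR \<open>val \<alpha> = 1\<close> by simp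
    qed
  next
    case 4
    have "bv (LE R ! i) + wd (LE R ! i) < bv (LE R ! j)" using tiles_lt[OF tR 4 j'] .
    then show ?thesis using f1 f2 bd1 bd2 by linarith
  qed
qed

lemma iota_eq:
  assumes "represents L R f"
  shows "iota f = iota_pair L R"
proof -
  define p where "p = (SOME p. represents (fst p) (snd p) f)"
  have "represents (fst p) (snd p) f" unfolding p_def
    by (rule someI_ex) (use assms in auto)
  then have "mid (iota f x) = mid (iota_pair L R x)" for x
    using iota_char[of "fst p" "snd p" f x] iota_char[OF assms, of x] unfolding iota_def p_def by simp
  then show ?thesis using mid_inj by blast
qed

lemma iota_mono:
  assumes "f \<in> thompsonF" "lex_less x y"
  shows "lex_less (iota f x) (iota f y)"
proof -
  obtain L R where rep: "represents L R f" using assms(1) by (auto simp: thompsonF_def)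
  show ?thesis unfolding iota_eq[OF rep] lex_mid iota_char[OF rep]
    by (rule f_mono[OF rep]) (use assms(2) in \<open>simp add: val_mid lex_mid\<close>)
qed

lemma part1: "\<forall>f\<in>thompsonF. \<forall>xs\<in>Sigma_n n. map (iota f) xs \<in> Sigma_n n"
proof (intro ballI)
  fix f xs assume f: "f \<in> thompsonF" and xs: "xs \<in> Sigma_n n"
  have "sorted_wrt (\<lambda>x y. lex_less (iota f x) (iota f y)) xs"
    by (rule sorted_wrt_mono_rel[of _ lex_less]) (use xs iota_mono[OF f] in \<open>auto simp: Sigma_n_def\<close>)
  then show "map (iota f) xs \<in> Sigma_n n" using xs by (simp add: Sigma_n_def sorted_wrt_map)
qed



lemma cover_tree:
  assumes fin: "finite S"
  shows "\<exists>T. is_tree T \<and> S \<subseteq> nodes T"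
proof -
  define T where "T = insert [] {x. \<exists>s\<in>S. \<exists>t. butlast x @ t = s}"
  define M where "M = Max (length ` S)"
  have bound: "length x \<le> Suc M" if xT: "x \<in> T" for x
  proof (cases "x = []")
    case False
    then obtain s t where st: "s \<in> S" "butlast x @ t = s" using xT by (auto simp: T_def)
    have "length s \<le> M" unfolding M_def using st(1) fin by (intro Max_ge) auto
    then show ?thesis using st by auto
  qed simp
  have finT: "finite T"
  proof (rule finite_subset)
    show "T \<subseteq> {xs. set xs \<subseteq> UNIV \<and> length xs \<le> Suc M}" using bound by auto
    show "finite {xs :: bool list. set xs \<subseteq> UNIV \<and> length xs \<le> Suc M}"
      by (rule finite_lists_length_le) simp
  qed
  have child: "x @ [b] \<in> T \<longleftrightarrow> (\<exists>s\<in>S. \<exists>t. x @ t = s)" for x b by (simp add: T_def)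
  have tree: "is_tree T"
    unfolding is_tree_def
  proof (intro conjI allI impI ballI)
    show "finite T" by (rule finT)
    show "[] \<in> T" by (simp add: T_def)
  next
    fix x u assume xu: "x @ u \<in> T"
    show "x \<in> T"
    proof (cases "x = []")
      case True then show ?thesis by (simp add: T_def)
    next
      case False
      then have "x @ u \<noteq> []" by simp
      then obtain s t where st: "s \<in> S" "butlast (x @ u) @ t = s" using xu by (auto simp: T_def)
      have "\<exists>v. butlast x @ v = butlast (x @ u)"
      proof (cases "u = []")
        case True then show ?thesis by auto
      next
        case False
        have "butlast (x @ u) = x @ butlast u" using False by (simp add: butlast_append)
        also have "\<dots> = butlast x @ ([last x] @ butlast u)" using \<open>x \<noteq> []\<close> by simp
        finally show ?thesis by metis
      qed
      then obtain v where "butlast x @ v = butlast (x @ u)" by blast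
      then have "butlast x @ (v @ t) = s" using st(2) by (metis append.assoc)
      then show ?thesis using st(1) by (auto simp: T_def)
    qed
  next
    fix x assume "x \<in> T"
    show "(x @ [False] \<in> T) = (x @ [True] \<in> T)" by (simp add: child)
  qed
  have "S \<subseteq> nodes T"
  proof
    fix s assume "s \<in> S"
    then have "s @ [False] \<in> T" using child[of s False] by blast
    then show "s \<in> nodes T" using nodes_iff'[OF tree] by simp
  qed
  then show ?thesis using tree by blast
qed

lemma split_tree:
  assumes tr: "is_tree T" and l: "l \<in> leaves T"
  shows "is_tree (T \<union> {l @ [False], l @ [True]})" "nodes (T \<union> {l @ [False], l @ [True]}) = insert l (nodes T)"
proof -
  let ?T = "T \<union> {l @ [False], l @ [True]}"
  have lT: "l \<in> T" and lc: "l @ [False] \<notin> T" "l @ [True] \<notin> T" using l by (auto simp: leaves_def)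
  have nd: "l @ [b] @ u \<notin> T" for b u
  proof
    assume "l @ [b] @ u \<in> T"
    then have "(l @ [b]) @ u \<in> T" by simp
    then have "l @ [b] \<in> T" using tree_prefix[OF tr] by blast
    then show False using lc by (cases b) auto
  qed
  show tr': "is_tree ?T"
    unfolding is_tree_def
  proof (intro conjI allI impI ballI)
    show "finite ?T" using tree_finite[OF tr] by simp
    show "[] \<in> ?T" using tree_Nil[OF tr] by simp
  next
    fix x u assume xu: "x @ u \<in> ?T"
    show "x \<in> ?T"
    proof (cases "x @ u \<in> T")
      case True then show ?thesis using tree_prefix[OF tr] by blast
    next
      case False
      then obtain b where b: "x @ u = l @ [b]" using xu by auto
      then obtain us where "x = l @ us \<and> us @ u = [b] \<or> x @ us = l \<and> u = us @ [b]"
        by (auto simp: append_eq_append_conv2)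
      then show ?thesis
      proof
        assume h: "x = l @ us \<and> us @ u = [b]"
        then have "us = [] \<or> us = [b]" by (cases us) auto
        then show ?thesis using h lT by (cases b) auto
      next
        assume h: "x @ us = l \<and> u = us @ [b]"
        then show ?thesis using tree_prefix[OF tr, of x us] lT by auto
      qed
    qed
  next
    fix x assume x: "x \<in> ?T"
    show "(x @ [False] \<in> ?T) = (x @ [True] \<in> ?T)"
    proof (cases "x = l")
      case True then show ?thesis by simp
    next
      case False
      have e: "x @ [c] \<in> ?T \<longleftrightarrow> x @ [c] \<in> T" for c using False by auto
      show ?thesis
      proof (cases "x \<in> T")
        case True then show ?thesis using e tree_child[OF tr True] by simp
      next
        case xT: False
        then obtain b where b: "x = l @ [b]" using x by auto
        have "x @ [c] \<notin> T" for c using nd[of b "[c]"] b by simp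
        then show ?thesis using e by simp
      qed
    qed
  qed
  show "nodes ?T = insert l (nodes T)"
  proof -
    have "x \<in> nodes ?T \<longleftrightarrow> x \<in> insert l (nodes T)" for x
    proof -
      have "x \<in> nodes ?T \<longleftrightarrow> x @ [False] \<in> ?T" by (rule nodes_iff'[OF tr'])
      also have "\<dots> \<longleftrightarrow> x @ [False] \<in> T \<or> x = l" by auto
      also have "\<dots> \<longleftrightarrow> x \<in> insert l (nodes T)" using nodes_iff'[OF tr] by auto
      finally show ?thesis .
    qed
    then show ?thesis by blast
  qed
qed

definition gp :: "bool list list \<Rightarrow> nat \<Rightarrow> bool list \<Rightarrow> bool" where
  "gp xs i z \<longleftrightarrow> (i = 0 \<or> lex_less (xs ! (i - 1)) z) \<and> (i = length xs \<or> lex_less z (xs ! i))"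

lemma node_index: "is_tree T \<Longrightarrow> z \<in> nodes T \<Longrightarrow> \<exists>j<length (NE T). NE T ! j = z"
  using NE_props[of T] by (metis in_set_conv_nth)

lemma tiles_bv_le: "tiles a b xs \<Longrightarrow> i \<le> j \<Longrightarrow> j < length xs \<Longrightarrow> bv (xs ! i) \<le> bv (xs ! j)"
  using tiles_bv_mono[of a b xs i j] by (cases "i = j") auto

lemma gap_leaf:
  assumes tr: "is_tree T" and s: "sorted_wrt lex_less xs" and sub: "set xs \<subseteq> nodes T" and i: "i \<le> length xs"
  shows "\<exists>l\<in>leaves T. gp xs i l"
proof -
  have t: "tiles 0 1 (LE T)" by (rule leaves_tiles[OF tr])
  have lenN: "length (NE T) = length (LE T) - 1" by (rule NE_len[OF tr])
  have ne: "LE T \<noteq> []" using LE_ne[OF tr] .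
  have leafin: "k < length (LE T) \<Longrightarrow> LE T ! k \<in> leaves T" for k using LE_props[OF tr] nth_mem by blast
  have nodemid: "\<And>z. z \<in> nodes T \<Longrightarrow> \<exists>j. Suc j < length (LE T) \<and> mid z = bv (LE T ! Suc j)"
  proof -
    fix z assume "z \<in> nodes T"
    then obtain j where j: "j < length (NE T)" "NE T ! j = z" using node_index[OF tr] by blast
    then show "\<exists>j. Suc j < length (LE T) \<and> mid z = bv (LE T ! Suc j)" using NE_mid[OF tr j(1)] lenN
      by (intro exI[of _ j]) auto
  qed
  show ?thesis
  proof (cases i)
    case 0
    have "lex_less (LE T ! 0) (xs ! 0)" if "0 < length xs"
    proof -
      have "xs ! 0 \<in> nodes T" using sub that nth_mem by blast
      then obtain j where j: "Suc j < length (LE T)" "mid (xs ! 0) = bv (LE T ! Suc j)" using nodemid by blast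
      have "bv (LE T ! 0) + wd (LE T ! 0) \<le> bv (LE T ! Suc j)" using tiles_le[OF t _ j(1)] by simp
      then show ?thesis using j mid_bounds[of "LE T ! 0"] by (simp add: lex_mid)
    qed
    then show ?thesis using 0 leafin[of 0] ne by (intro bexI[of _ "LE T ! 0"]) (auto simp: gp_def)
  next
    case (Suc i')
    then have "i' < length xs" using i by simp
    then have "xs ! i' \<in> nodes T" using sub nth_mem by blast
    then obtain j where j: "Suc j < length (LE T)" "mid (xs ! i') = bv (LE T ! Suc j)" using nodemid by blast
    let ?l = "LE T ! Suc j"
    have "lex_less (xs ! i') ?l" using j mid_bounds[of ?l] by (simp add: lex_mid)
    moreover have g2: "lex_less ?l (xs ! i)" if "i < length xs"
    proof -
      have "xs ! i \<in> nodes T" using sub that nth_mem by blast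
      then obtain j' where j': "Suc j' < length (LE T)" "mid (xs ! i) = bv (LE T ! Suc j')" using nodemid by blast
      have "lex_less (xs ! i') (xs ! i)" using sorted_wrt_nth_less[OF s _ that] Suc by simp
      then have "bv (LE T ! Suc j) < bv (LE T ! Suc j')" using j j' by (simp add: lex_mid)
      then have "Suc j < Suc j'" using tiles_bv_le[OF t, of "Suc j'" "Suc j"] j(1) by force
      then have "bv ?l + wd ?l \<le> bv (LE T ! Suc j')" using tiles_le[OF t _ j'(1)] by simp
      then show ?thesis using j' mid_bounds[of ?l] by (simp add: lex_mid)
    qed
    moreover have "i = length xs \<or> lex_less ?l (xs ! i)" using g2 assms(4) by (cases "i < length xs") auto
    ultimately show ?thesis using Suc leafin[OF j(1)] by (intro bexI[of _ ?l]) (auto simp: gp_def)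
  qed
qed



definition Gc :: "bool list set \<Rightarrow> bool list list \<Rightarrow> nat \<Rightarrow> nat" where
  "Gc T xs i = card {z \<in> nodes T. gp xs i z}"
definition rk :: "bool list set \<Rightarrow> bool list \<Rightarrow> nat" where
  "rk T x = card {z \<in> nodes T. lex_less z x}"

lemma sorted_le: "sorted_wrt lex_less xs \<Longrightarrow> a \<le> b \<Longrightarrow> b < length xs \<Longrightarrow> xs ! a = xs ! b \<or> lex_less (xs ! a) (xs ! b)"
  using sorted_wrt_nth_less[of lex_less xs a b] by (cases "a = b") auto

lemma gp_unique_aux:
  assumes s: "sorted_wrt lex_less xs" and ii: "i < i'" "i' \<le> length xs" and g: "gp xs i z" "gp xs i' z"
  shows False
proof -
  have a: "lex_less z (xs ! i)" using g(1) ii by (auto simp: gp_def)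
  have b: "lex_less (xs ! (i' - 1)) z" using g(2) ii by (auto simp: gp_def)
  have "xs ! i = xs ! (i' - 1) \<or> lex_less (xs ! i) (xs ! (i' - 1))" using sorted_le[OF s, of i "i' - 1"] ii by simp
  then show False using a b lex_trans lex_asym by metis
qed

lemma gp_unique: "sorted_wrt lex_less xs \<Longrightarrow> i \<le> length xs \<Longrightarrow> i' \<le> length xs \<Longrightarrow> gp xs i z \<Longrightarrow> gp xs i' z \<Longrightarrow> i = i'"
  using gp_unique_aux by (metis linorder_neqE_nat)

lemma rank_base: "0 < length xs \<Longrightarrow> rk T (xs ! 0) = Gc T xs 0"
  unfolding rk_def Gc_def gp_def by simp

lemma rank_step:
  assumes tr: "is_tree T" and s: "sorted_wrt lex_less xs" and sub: "set xs \<subseteq> nodes T" and m: "Suc m < length xs"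
  shows "rk T (xs ! Suc m) = rk T (xs ! m) + 1 + Gc T xs (Suc m)"
proof -
  have fin: "finite (nodes T)" by (rule nodes_finite[OF tr])
  have xm: "xs ! m \<in> nodes T" using sub m nth_mem by (metis Suc_lessD subsetD)
  have lt: "lex_less (xs ! m) (xs ! Suc m)" using sorted_wrt_nth_less[OF s _ m] by simp
  have gpe: "gp xs (Suc m) z \<longleftrightarrow> lex_less (xs ! m) z \<and> lex_less z (xs ! Suc m)" for z
    using m by (auto simp: gp_def)
  have e: "{z \<in> nodes T. lex_less z (xs ! Suc m)} =
     ({z \<in> nodes T. lex_less z (xs ! m)} \<union> {xs ! m}) \<union> {z \<in> nodes T. gp xs (Suc m) z}"
    using xm lt lex_trans by (auto simp: gpe) (meson lex_total)
  have "card (({z \<in> nodes T. lex_less z (xs ! m)} \<union> {xs ! m}) \<union> {z \<in> nodes T. gp xs (Suc m) z})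
     = card ({z \<in> nodes T. lex_less z (xs ! m)} \<union> {xs ! m}) + card {z \<in> nodes T. gp xs (Suc m) z}"
    by (rule card_Un_disjoint) (use fin lex_asym in \<open>auto simp: gpe\<close>)
  moreover have "card ({z \<in> nodes T. lex_less z (xs ! m)} \<union> {xs ! m}) = card {z \<in> nodes T. lex_less z (xs ! m)} + 1"
    using fin by (subst card_Un_disjoint) auto
  ultimately show ?thesis unfolding rk_def Gc_def e by simp
qed

lemma rank_total:
  assumes tr: "is_tree T" and s: "sorted_wrt lex_less xs" and sub: "set xs \<subseteq> nodes T" and m: "Suc m = length xs"
  shows "card (nodes T) = rk T (xs ! m) + 1 + Gc T xs (Suc m)"
proof -
  have fin: "finite (nodes T)" by (rule nodes_finite[OF tr])
  have xm: "xs ! m \<in> nodes T" using sub m nth_mem by (metis lessI subsetD)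
  have gpe: "gp xs (Suc m) z \<longleftrightarrow> lex_less (xs ! m) z" for z
    by (simp add: gp_def m[symmetric])
  have e: "nodes T =
     ({z \<in> nodes T. lex_less z (xs ! m)} \<union> {xs ! m}) \<union> {z \<in> nodes T. gp xs (Suc m) z}"
    using xm by (auto simp: gpe) (meson lex_total)
  have "card (({z \<in> nodes T. lex_less z (xs ! m)} \<union> {xs ! m}) \<union> {z \<in> nodes T. gp xs (Suc m) z})
     = card ({z \<in> nodes T. lex_less z (xs ! m)} \<union> {xs ! m}) + card {z \<in> nodes T. gp xs (Suc m) z}"
    by (rule card_Un_disjoint) (use fin lex_asym in \<open>auto simp: gpe\<close>)
  moreover have "card ({z \<in> nodes T. lex_less z (xs ! m)} \<union> {xs ! m}) = card {z \<in> nodes T. lex_less z (xs ! m)} + 1"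
    using fin by (subst card_Un_disjoint) auto
  ultimately show ?thesis unfolding rk_def Gc_def using e by simp
qed

lemma rank_total0: "length xs = 0 \<Longrightarrow> card (nodes T) = Gc T xs 0"
  unfolding Gc_def gp_def by simp

lemma ranks_match:
  assumes L: "is_tree L" and R: "is_tree R" and sx: "sorted_wrt lex_less xs" and sy: "sorted_wrt lex_less ys"
    and subx: "set xs \<subseteq> nodes L" and suby: "set ys \<subseteq> nodes R" and len: "length xs = length ys"
    and G: "\<forall>i\<le>length xs. Gc L xs i = Gc R ys i"
  shows "(\<forall>m<length xs. rk L (xs ! m) = rk R (ys ! m)) \<and> card (nodes L) = card (nodes R)"
proof -
  have r: "rk L (xs ! m) = rk R (ys ! m)" if "m < length xs" for m
    using that
  proof (induct m)
    case 0 then show ?case using rank_base[of xs L] rank_base[of ys R] G len by simp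
  next
    case (Suc m)
    then show ?case using rank_step[OF L sx subx Suc(2)] rank_step[OF R sy suby] G len by simp
  qed
  have "card (nodes L) = card (nodes R)"
  proof (cases "length xs")
    case 0 then show ?thesis using rank_total0[of xs L] rank_total0[of ys R] G len by simp
  next
    case (Suc m)
    then show ?thesis using rank_total[OF L sx subx] rank_total[OF R sy suby] r[of m] G len by simp
  qed
  then show ?thesis using r by blast
qed

lemma raise:
  assumes tr: "is_tree T" and s: "sorted_wrt lex_less xs" and sub: "set xs \<subseteq> nodes T" and i: "i \<le> length xs"
  shows "\<exists>T'. is_tree T' \<and> set xs \<subseteq> nodes T' \<and> Gc T' xs i = Suc (Gc T xs i) \<and>
     (\<forall>i'\<le>length xs. i' \<noteq> i \<longrightarrow> Gc T' xs i' = Gc T xs i')"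
proof -
  obtain l where l: "l \<in> leaves T" "gp xs i l" using gap_leaf[OF tr s sub i] by blast
  define T' where "T' = T \<union> {l @ [False], l @ [True]}"
  have tr': "is_tree T'" and nd: "nodes T' = insert l (nodes T)" using split_tree[OF tr l(1)] T'_def by auto
  have ln: "l \<notin> nodes T" using l(1) leaves_nodes_disj by blast
  have fin: "finite (nodes T)" by (rule nodes_finite[OF tr])
  have c: "Gc T' xs i' = (if gp xs i' l then Suc (Gc T xs i') else Gc T xs i')" for i'
  proof -
    have "{z \<in> nodes T'. gp xs i' z} = (if gp xs i' l then insert l {z \<in> nodes T. gp xs i' z} else {z \<in> nodes T. gp xs i' z})"
      using nd by auto
    then show ?thesis unfolding Gc_def using fin ln by (simp add: card_insert_disjoint)
  qed
  have "\<forall>i'\<le>length xs. i' \<noteq> i \<longrightarrow> Gc T' xs i' = Gc T xs i'"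
    using c gp_unique[OF s i _ l(2)] by auto
  then show ?thesis using tr' nd sub c l(2) by (intro exI[of _ T']) auto
qed

lemma raise_to:
  assumes "is_tree T" "sorted_wrt lex_less xs" "set xs \<subseteq> nodes T" "\<forall>i\<le>length xs. Gc T xs i \<le> g i"
  shows "\<exists>T'. is_tree T' \<and> set xs \<subseteq> nodes T' \<and> (\<forall>i\<le>length xs. Gc T' xs i = g i)"
  using assms
proof (induct "\<Sum>i\<le>length xs. g i - Gc T xs i" arbitrary: T rule: less_induct)
  case (less T)
  show ?case
  proof (cases "\<forall>i\<le>length xs. Gc T xs i = g i")
    case True then show ?thesis using less.prems by blast
  next
    case False
    then obtain i where i: "i \<le> length xs" "Gc T xs i < g i" using less.prems(4) le_neq_implies_less by blast
    obtain T' where T': "is_tree T'" "set xs \<subseteq> nodes T'" "Gc T' xs i = Suc (Gc T xs i)"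
      "\<forall>i'\<le>length xs. i' \<noteq> i \<longrightarrow> Gc T' xs i' = Gc T xs i'"
      using raise[OF less.prems(1-3) i(1)] by blast
    have le': "\<forall>i'\<le>length xs. Gc T' xs i' \<le> g i'" using T'(3,4) i less.prems(4) by (metis Suc_leI)
    have "(\<Sum>i\<le>length xs. g i - Gc T' xs i) < (\<Sum>i\<le>length xs. g i - Gc T xs i)"
    proof (rule sum_strict_mono_ex1)
      show "finite {..length xs}" by simp
      show "\<forall>x\<in>{..length xs}. g x - Gc T' xs x \<le> g x - Gc T xs x" using T'(3,4) by auto
      show "\<exists>a\<in>{..length xs}. g a - Gc T' xs a < g a - Gc T xs a" using T'(3) i by (intro bexI[of _ i]) auto
    qed
    then show ?thesis using less.hyps[OF _ T'(1) less.prems(2) T'(2) le'] by blast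
  qed
qed



definition lidx :: "bool list set \<Rightarrow> (nat \<Rightarrow> bool) \<Rightarrow> nat" where
  "lidx T \<omega> = (THE i. i < length (LE T) \<and> pref (LE T ! i) \<omega>)"

lemma lidx_unique: "is_tree T \<Longrightarrow> i < length (LE T) \<Longrightarrow> pref (LE T ! i) \<omega> \<Longrightarrow>
   i' < length (LE T) \<Longrightarrow> pref (LE T ! i') \<omega> \<Longrightarrow> i' = i"
proof -
  assume a: "is_tree T" "i < length (LE T)" "pref (LE T ! i) \<omega>" "i' < length (LE T)" "pref (LE T ! i') \<omega>"
  have "LE T ! i \<in> leaves T" "LE T ! i' \<in> leaves T" using a LE_props[OF a(1)] nth_mem by blast+
  then have "LE T ! i' = LE T ! i" using pref_unique[OF a(1)] a by blast
  then show "i' = i" using nth_eq_iff_index_eq[OF lex_enum_distinct[OF leaves_finite[OF a(1)]] a(4) a(2)] by simp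
qed

lemma lidx_eq: "is_tree T \<Longrightarrow> i < length (LE T) \<Longrightarrow> pref (LE T ! i) \<omega> \<Longrightarrow> lidx T \<omega> = i"
  unfolding lidx_def by (rule the_equality) (auto dest: lidx_unique)

lemma lidx: "is_tree T \<Longrightarrow> lidx T \<omega> < length (LE T) \<and> pref (LE T ! lidx T \<omega>) \<omega>"
  using seq_index[of T \<omega>] lidx_eq by metis

definition tpm :: "bool list set \<Rightarrow> bool list set \<Rightarrow> (nat \<Rightarrow> bool) \<Rightarrow> (nat \<Rightarrow> bool)" where
  "tpm L R \<omega> = cat (LE R ! lidx L \<omega>) (\<lambda>n. \<omega> (n + length (LE L ! lidx L \<omega>)))"

lemma tpm_cat: "is_tree L \<Longrightarrow> i < length (LE L) \<Longrightarrow> tpm L R (cat (LE L ! i) \<alpha>) = cat (LE R ! i) \<alpha>"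
  unfolding tpm_def using lidx_eq[of L i "cat (LE L ! i) \<alpha>"] by simp

lemma tpm_inv:
  assumes L: "is_tree L" and R: "is_tree R" and len: "length (LE L) = length (LE R)"
  shows "tpm R L (tpm L R \<omega>) = \<omega>"
proof -
  define i where "i = lidx L \<omega>"
  have i: "i < length (LE L)" "pref (LE L ! i) \<omega>" using lidx[OF L] i_def by auto
  define \<alpha> where "\<alpha> = (\<lambda>n. \<omega> (n + length (LE L ! i)))"
  have o: "\<omega> = cat (LE L ! i) \<alpha>" unfolding \<alpha>_def using cat_pref[OF i(2)] by simp
  have "tpm L R \<omega> = cat (LE R ! i) \<alpha>" using tpm_cat[OF L i(1)] o by metis
  then show ?thesis using tpm_cat[OF R, of i L \<alpha>] i(1) len o by simp
qed

lemma cont_finite_dep: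
  fixes h :: "(nat \<Rightarrow> bool) \<Rightarrow> bool"
  assumes dep: "\<And>\<omega> \<omega>'. (\<forall>j<M. \<omega> j = \<omega>' j) \<Longrightarrow> h \<omega> = h \<omega>'"
  shows "continuous_on UNIV h"
  unfolding continuous_on_open_invariant
proof (intro allI impI)
  fix B :: "bool set" assume "open B"
  have "open (h -` B)"
    unfolding open_subopen[of "h -` B"]
  proof
    fix \<omega> assume \<omega>: "\<omega> \<in> h -` B"
    define C where "C = {\<omega>'. \<forall>j\<in>{..<M}. \<omega>' (id j) \<in> {\<omega> j}}"
    have "open C" unfolding C_def by (rule product_topology_basis') (auto intro: open_discrete)
    moreover have "\<omega> \<in> C" by (simp add: C_def)
    moreover have "C \<subseteq> h -` B" using \<omega> dep by (auto simp: C_def)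
    ultimately show "\<exists>T. open T \<and> \<omega> \<in> T \<and> T \<subseteq> h -` B" by blast
  qed
  then show "\<exists>A. open A \<and> A \<inter> UNIV = h -` B \<inter> UNIV" by auto
qed

lemma tpm_cont:
  assumes L: "is_tree L"
  shows "continuous_on UNIV (tpm L R)"
proof (rule continuous_on_coordinatewise_then_product)
  fix n
  define K where "K = Max (length ` leaves L)"
  have K: "length (LE L ! i) \<le> K" if "i < length (LE L)" for i
    unfolding K_def using that LE_props[OF L] leaves_finite[OF L] by (intro Max_ge) auto
  show "continuous_on UNIV (\<lambda>\<omega>. tpm L R \<omega> n)"
  proof (rule cont_finite_dep[of "n + K + 1"])
    fix \<omega> \<omega>' :: "nat \<Rightarrow> bool" assume ag: "\<forall>j<n + K + 1. \<omega> j = \<omega>' j"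
    define i where "i = lidx L \<omega>"
    have i: "i < length (LE L)" "pref (LE L ! i) \<omega>" using lidx[OF L] i_def by auto
    have "pref (LE L ! i) \<omega>'" using i(2) ag K[OF i(1)] by (auto simp: pref_def)
    then have i': "lidx L \<omega>' = i" using lidx_eq[OF L i(1)] by simp
    have "\<omega> (n + length (LE L ! i) - length (LE R ! i)) = \<omega>' (n + length (LE L ! i) - length (LE R ! i))"
      using ag K[OF i(1)] by auto
    then show "tpm L R \<omega> n = tpm L R \<omega>' n" unfolding tpm_def i' i_def[symmetric] by (simp add: cat_def)
  qed
qed

lemma tpm_thompson:
  assumes L: "is_tree L" and R: "is_tree R" and len: "length (LE L) = length (LE R)"
  shows "tpm L R \<in> thompsonF" "represents L R (tpm L R)"
proof -
  have inv1: "\<And>\<omega>. tpm R L (tpm L R \<omega>) = \<omega>" using tpm_inv[OF L R len] .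
  have inv2: "\<And>\<omega>. tpm L R (tpm R L \<omega>) = \<omega>" using tpm_inv[OF R L len[symmetric]] .
  have "homeomorphism UNIV UNIV (tpm L R) (tpm R L)"
    unfolding homeomorphism_def using inv1 inv2 tpm_cont[OF L] tpm_cont[OF R]
    by (auto simp: image_def) metis+
  moreover show rep: "represents L R (tpm L R)"
    unfolding represents_def using L R len tpm_cat[OF L]
      lex_enum_len[OF leaves_finite[OF L]] lex_enum_len[OF leaves_finite[OF R]] by auto
  ultimately show "tpm L R \<in> thompsonF" unfolding thompsonF_def by blast
qed

lemma iota_node: "is_tree L \<Longrightarrow> j < length (NE L) \<Longrightarrow> iota_pair L R (NE L ! j) = NE R ! j"
proof -
  assume a: "is_tree L" "j < length (NE L)"
  have "NE L ! j \<in> nodes L" using a NE_props[OF a(1)] nth_mem by blast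
  moreover have "(THE i. i < length (NE L) \<and> NE L ! i = NE L ! j) = j"
    using the_index[OF lex_enum_distinct[OF nodes_finite[OF a(1)]] a(2)] .
  ultimately show ?thesis unfolding iota_pair_def by simp
qed

lemma rk_NE: "is_tree T \<Longrightarrow> j < length (NE T) \<Longrightarrow> rk T (NE T ! j) = j"
  unfolding rk_def using rank_sorted[of "NE T" j] NE_props[of T] by simp

lemma part2: "\<forall>xs\<in>Sigma_n n. \<forall>ys\<in>Sigma_n n. \<exists>f\<in>thompsonF. map (iota f) xs = ys"
proof (intro ballI)
  fix xs ys assume xs: "xs \<in> Sigma_n n" and ys: "ys \<in> Sigma_n n"
  have sx: "sorted_wrt lex_less xs" "length xs = n" and sy: "sorted_wrt lex_less ys" "length ys = n"
    using xs ys by (auto simp: Sigma_n_def)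
  obtain T1 where T1: "is_tree T1" "set xs \<subseteq> nodes T1" using cover_tree[of "set xs"] by auto
  obtain T2 where T2: "is_tree T2" "set ys \<subseteq> nodes T2" using cover_tree[of "set ys"] by auto
  define g where "g i = max (Gc T1 xs i) (Gc T2 ys i)" for i
  obtain L where L: "is_tree L" "set xs \<subseteq> nodes L" "\<forall>i\<le>length xs. Gc L xs i = g i"
    using raise_to[OF T1(1) sx(1) T1(2), of g] by (auto simp: g_def)
  obtain R where R: "is_tree R" "set ys \<subseteq> nodes R" "\<forall>i\<le>length ys. Gc R ys i = g i"
    using raise_to[OF T2(1) sy(1) T2(2), of g] by (auto simp: g_def)
  have rm: "(\<forall>m<length xs. rk L (xs ! m) = rk R (ys ! m)) \<and> card (nodes L) = card (nodes R)"
    by (rule ranks_match[OF L(1) R(1) sx(1) sy(1) L(2) R(2)]) (use L(3) R(3) sx sy in auto)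
  have lenN: "length (NE L) = length (NE R)"
    using rm lex_enum_len[OF nodes_finite[OF L(1)]] lex_enum_len[OF nodes_finite[OF R(1)]] by simp
  have len: "length (LE L) = length (LE R)"
    using lenN NE_len[OF L(1)] NE_len[OF R(1)] LE_ne[OF L(1)] LE_ne[OF R(1)] by (cases "LE L"; cases "LE R") auto
  define f where "f = tpm L R"
  have fF: "f \<in> thompsonF" and rep: "represents L R f" using tpm_thompson[OF L(1) R(1) len] f_def by auto
  have "iota f (xs ! m) = ys ! m" if m: "m < n" for m
  proof -
    obtain j where j: "j < length (NE L)" "NE L ! j = xs ! m"
      using node_index[OF L(1)] L(2) m sx(2) nth_mem by (metis subsetD)
    obtain j' where j': "j' < length (NE R)" "NE R ! j' = ys ! m"
      using node_index[OF R(1)] R(2) m sy(2) nth_mem by (metis subsetD)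
    have "j = j'" using rm m sx(2) rk_NE[OF L(1) j(1)] rk_NE[OF R(1) j'(1)] j(2) j'(2) by auto
    then show ?thesis using iota_eq[OF rep] iota_node[OF L(1) j(1), of R] j j' by simp
  qed
  then have "map (iota f) xs = ys" using sx(2) sy(2) by (intro nth_equalityI) auto
  then show "\<exists>f\<in>thompsonF. map (iota f) xs = ys" using fF by blast
qed


theorem lemma3p2:
  fixes n :: nat
  shows "(\<forall>f\<in>thompsonF. \<forall>xs\<in>Sigma_n n. map (iota f) xs \<in> Sigma_n n) \<and>
         (\<forall>xs\<in>Sigma_n n. \<forall>ys\<in>Sigma_n n. \<exists>f\<in>thompsonF. map (iota f) xs = ys)"
  using part1 part2 by blast

end
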